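(* With the notation $\epsilon\in(0,4)$, $\mathcal{H}_\epsilon=\ell^2(\epsilon+4\mathbb{Z})$, $B(v)=\tfrac{27}{8}|v|\,\big||v+1|^{1/3}-|v-1|^{1/3}\big|^3$, $\tilde A(v)=|v|\,\big||v+1|-|v-1|\big|$, $(D\psi)(v)=\psi(v+2)-\psi(v-2)$, and $\hat\rho_1=-\tfrac{\rho_c}{8}D\,B\tilde A\,D$, $\hat\rho_2=-\tfrac{\rho_c}{8}B^{1/2}D\,\tilde A\,D\,B^{1/2}$ (functions acting by multiplication): $0$ is not an eigenvalue of $\hat\rho_1$ nor of $\hat\rho_2$, i.e. the equation $\hat\rho_i\psi=0$ has no nonzero normalizable solution $\psi\in\mathcal{H}_\epsilon$, so $\hat\rho_i$ is injective ($i=1,2$). *)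

theory Defs
  imports "HOL-Analysis.Analysis"
begin

definition lat :: "real \<Rightarrow> real set" where
  "lat \<epsilon> = {\<epsilon> + 4 * of_int n | n. True}"

definition in_H :: "real \<Rightarrow> (real \<Rightarrow> complex) \<Rightarrow> bool" where
  "in_H \<epsilon> \<psi> \<longleftrightarrow> (\<forall>v. v \<notin> lat \<epsilon> \<longrightarrow> \<psi> v = 0) \<and>
     ((\<lambda>v. (cmod (\<psi> v))\<^sup>2) summable_on lat \<epsilon>)"

definition Bfun :: "real \<Rightarrow> real" where
  "Bfun v = 27 / 8 * \<bar>v\<bar> * \<bar>\<bar>v + 1\<bar> powr (1/3) - \<bar>v - 1\<bar> powr (1/3)\<bar> ^ 3"

definition Atil :: "real \<Rightarrow> real" where
  "Atil v = \<bar>v\<bar> * \<bar>\<bar>v + 1\<bar> - \<bar>v - 1\<bar>\<bar>"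

definition Dop :: "(real \<Rightarrow> complex) \<Rightarrow> real \<Rightarrow> complex" where
  "Dop \<psi> v = \<psi> (v + 2) - \<psi> (v - 2)"

definition mult :: "(real \<Rightarrow> real) \<Rightarrow> (real \<Rightarrow> complex) \<Rightarrow> real \<Rightarrow> complex" where
  "mult f \<psi> v = complex_of_real (f v) * \<psi> v"

definition rho1 :: "real \<Rightarrow> (real \<Rightarrow> complex) \<Rightarrow> real \<Rightarrow> complex" where
  "rho1 \<rho>c \<psi> = (\<lambda>v. complex_of_real (- \<rho>c / 8) *
      Dop (mult Bfun (mult Atil (Dop \<psi>))) v)"

definition rho2 :: "real \<Rightarrow> (real \<Rightarrow> complex) \<Rightarrow> real \<Rightarrow> complex" where
  "rho2 \<rho>c \<psi> = (\<lambda>v. complex_of_real (- \<rho>c / 8) *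
      mult (\<lambda>w. sqrt (Bfun w)) (Dop (mult Atil (Dop (mult (\<lambda>w. sqrt (Bfun w)) \<psi>)))) v)"

end

theory Submission
  imports Defs
begin

lemma cube_root: "x \<ge> 0 \<Longrightarrow> (x powr (1/3)) ^ 3 = (x::real)"
proof (cases "x = 0")
  case False
  assume "x \<ge> 0"
  hence "x > 0" using False by simp
  hence "(x powr (1/3)) ^ 3 = (x powr (1/3)) powr (real 3)" by (subst powr_realpow) auto
  also have "... = x" using \<open>x > 0\<close> by (simp add: powr_powr)
  finally show ?thesis .
qed simp

lemma B_bound:
  assumes w: "w \<ge> 1"
  shows "Bfun w \<le> 27 * w / (w+1)^2"
proof -
  define a where "a = (w+1) powr (1/3)"
  define b where "b = (w-1) powr (1/3)"
  have a3: "a^3 = w+1" unfolding a_def using w by (simp add: cube_root)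
  have b3: "b^3 = w-1" unfolding b_def using w by (simp add: cube_root)
  have b0: "b \<ge> 0" unfolding b_def by simp
  have a0: "a > 0" unfolding a_def using w by simp
  have ab: "b \<le> a" unfolding a_def b_def using w by (intro powr_mono2) auto
  have prod: "(a-b)*(a^2+a*b+b^2) = 2" using a3 b3 by (simp add: algebra_simps power2_eq_square power3_eq_cube)
  have q: "a^2+a*b+b^2 \<ge> a^2" using a0 b0 by simp
  have apos: "a^2 > 0" using a0 by simp
  have "a - b \<le> 2 / a^2"
  proof -
    have "(a-b)*a^2 \<le> (a-b)*(a^2+a*b+b^2)" using ab q by (intro mult_left_mono) auto
    then show ?thesis using prod apos by (simp add: field_simps)
  qed
  hence "(a-b)^3 \<le> (2/a^2)^3" using ab by (intro power_mono) auto
  also have "... = 8 / (a^3)^2" by (simp add: power_divide flip: power_mult) 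
  also have "... = 8/(w+1)^2" using a3 by simp
  finally have c: "(a-b)^3 \<le> 8/(w+1)^2" .
  have "Bfun w = 27/8 * w * (a-b)^3" unfolding Bfun_def a_def b_def using w ab[unfolded a_def b_def] by simp
  also have "... \<le> 27/8 * w * (8/(w+1)^2)" using c w by (intro mult_left_mono) auto
  also have "... = 27 * w / (w+1)^2" by simp
  finally show ?thesis .
qed

lemma B_le: "w \<ge> 1 \<Longrightarrow> Bfun w \<le> 27"
proof -
  assume w: "w \<ge> 1"
  have p: "(w+1)^2 > 0" using w by simp
  have "27 * w \<le> 27 * (w+1)^2" using w by (simp add: power2_eq_square algebra_simps)
  hence "27 * w / (w+1)^2 \<le> 27" using p by (simp add: pos_divide_le_eq)
  thus ?thesis using B_bound[OF w] by linarith
qed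

lemma A_eq: "w \<ge> 1 \<Longrightarrow> Atil w = 2*w" unfolding Atil_def by simp

lemma BA_le: "w \<ge> 1 \<Longrightarrow> Bfun w * Atil w \<le> 54"
proof -
  assume w: "w \<ge> 1"
  have "Bfun w * Atil w \<le> 27 * w / (w+1)^2 * (2*w)" unfolding A_eq[OF w] using B_bound[OF w] w by (intro mult_right_mono) auto
  also have "... = 54 * (w*w) / (w+1)^2" by (simp add: field_simps)
  also have "... \<le> 54" proof -
    have p: "(w+1)^2 > 0" using w by simp
    have "54 * (w*w) \<le> 54 * (w+1)^2" using w by (simp add: power2_eq_square algebra_simps)
    thus ?thesis using p by (simp add: pos_divide_le_eq)
  qed
  finally show ?thesis .
qed

lemma B_nonneg: "Bfun w \<ge> 0" unfolding Bfun_def by simp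

lemma B_even: "Bfun (-w) = Bfun w" unfolding Bfun_def
  by (simp add: abs_minus_commute) (smt (verit))

lemma B_ne0: "w \<noteq> 0 \<Longrightarrow> Bfun w \<noteq> 0"
proof
  assume w: "w \<noteq> 0" and B: "Bfun w = 0"
  hence "\<bar>w + 1\<bar> powr (1/3) = \<bar>w - 1\<bar> powr (1/3)" unfolding Bfun_def by simp
  hence "(\<bar>w + 1\<bar> powr (1/3))^3 = (\<bar>w - 1\<bar> powr (1/3))^3" by simp
  hence "\<bar>w + 1\<bar> = \<bar>w - 1\<bar>" by (simp add: cube_root)
  thus False using w by arith
qed

lemma A_ne0: "w \<noteq> 0 \<Longrightarrow> Atil w \<noteq> 0" unfolding Atil_def by (cases "w \<ge> 1"; cases "w \<ge> -1") (auto simp: abs_if split: if_splits)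


lemma lat_shift: assumes "v \<in> lat e" shows "v + 4 * of_int k \<in> lat e"
proof -
  from assms obtain n where "v = e + 4 * of_int n" unfolding lat_def by auto
  hence "v + 4 * of_int k = e + 4 * of_int (n + k)" by (simp add: algebra_simps)
  thus ?thesis unfolding lat_def by blast
qed

lemma lat_plus: "v \<in> lat e \<Longrightarrow> v + 4 * real k \<in> lat e"
  using lat_shift[of v e "int k"] by simp
lemma lat_minus: "v \<in> lat e \<Longrightarrow> v - 4 * real k \<in> lat e"
  using lat_shift[of v e "- int k"] by simp
lemma lat_p4: "v \<in> lat e \<Longrightarrow> v + 4 \<in> lat e"
  using lat_shift[of v e 1] by simp
lemma lat_m4: "v \<in> lat e \<Longrightarrow> v - 4 \<in> lat e"
  using lat_shift[of v e "-1"] by simp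

lemma lat_ne0: assumes "v \<in> lat e" "0 < e" "e < 4" shows "v \<noteq> 0"
proof -
  from assms obtain n where v: "v = e + 4 * of_int n" unfolding lat_def by auto
  show ?thesis
  proof (cases "n \<ge> 0")
    case True then have "(of_int n::real) \<ge> 0" by simp
    thus ?thesis using v assms by simp
  next
    case False then have "(of_int n::real) \<le> -1" by simp
    thus ?thesis using v assms by simp
  qed
qed

lemma sq_zero: assumes "(\<lambda>n. (cmod (f n))^2) \<longlonglongrightarrow> 0" shows "f \<longlonglongrightarrow> 0"
proof -
  have "(\<lambda>n. sqrt ((cmod (f n))^2)) \<longlonglongrightarrow> sqrt 0" by (intro tendsto_real_sqrt assms)
  hence "(\<lambda>n. norm (f n)) \<longlonglongrightarrow> 0" by simp
  thus ?thesis by (simp add: tendsto_norm_zero_iff)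
qed

lemma H_seq:
  assumes H: "in_H e \<psi>" and v: "v \<in> lat e" and hl: "\<And>n. h n \<in> lat e" and inj: "inj h"
  shows "(\<lambda>n. \<psi> (h n)) \<longlonglongrightarrow> 0"
proof -
  have s: "(\<lambda>v. (cmod (\<psi> v))\<^sup>2) summable_on lat e" using H unfolding in_H_def by simp
  have "(\<lambda>v. (cmod (\<psi> v))\<^sup>2) summable_on range h"
    using hl by (intro summable_on_subset_banach[OF s]) auto
  hence "((\<lambda>v. (cmod (\<psi> v))\<^sup>2) \<circ> h) summable_on UNIV" using summable_on_reindex[OF inj] by blast
  hence "summable (\<lambda>n. (cmod (\<psi> (h n)))\<^sup>2)"
    by (subst (asm) summable_on_UNIV_nonneg_real_iff) (auto simp: o_def)
  hence "(\<lambda>n. (cmod (\<psi> (h n)))\<^sup>2) \<longlonglongrightarrow> 0" by (rule summable_LIMSEQ_zero)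
  thus ?thesis by (rule sq_zero)
qed

lemma H_up: "in_H e \<psi> \<Longrightarrow> v \<in> lat e \<Longrightarrow> (\<lambda>n. \<psi> (v + 4 * real n)) \<longlonglongrightarrow> 0"
  by (rule H_seq[where h="\<lambda>n. v + 4 * real n"]) (auto simp: lat_plus inj_def)
lemma H_down: "in_H e \<psi> \<Longrightarrow> v \<in> lat e \<Longrightarrow> (\<lambda>n. \<psi> (v - 4 * real n)) \<longlonglongrightarrow> 0"
  by (rule H_seq[where h="\<lambda>n. v - 4 * real n"]) (auto simp: lat_minus inj_def)

lemma ev_ge: "eventually (\<lambda>n. c + 4 * real n \<ge> 1) sequentially"
proof -
  obtain N :: nat where "(1 - c)/4 \<le> real N" using real_arch_simple by blast
  thus ?thesis unfolding eventually_sequentially by (intro exI[of _ N]) auto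
qed

lemma ev_le: "eventually (\<lambda>n. c - 4 * real n \<le> -1) sequentially"
proof -
  obtain N :: nat where "(c + 1)/4 \<le> real N" using real_arch_simple by blast
  thus ?thesis unfolding eventually_sequentially by (intro exI[of _ N]) auto
qed

lemma chain_zero:
  assumes up: "\<And>v. v \<in> lat e \<Longrightarrow> (\<lambda>n. f (v + 4 * real n)) \<longlonglongrightarrow> (0::complex)"
    and down: "\<And>v. v \<in> lat e \<Longrightarrow> (\<lambda>n. f (v - 4 * real n)) \<longlonglongrightarrow> 0"
    and step: "\<And>v. v \<in> lat e \<Longrightarrow> v + 2 \<noteq> 0 \<Longrightarrow> f (v + 4) = f v"
    and e: "0 < e" "e < 4" and v: "v \<in> lat e"
  shows "f v = 0"
proof -
  have "v \<noteq> 0" using lat_ne0[OF v e] .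
  then consider "v > 0" | "v < 0" by linarith
  thus ?thesis
  proof cases
    case 1
    have c: "f (v + 4 * real n) = f v" for n
    proof (induction n)
      case (Suc n)
      have "f (v + 4 * real n + 4) = f (v + 4 * real n)"
        using 1 by (intro step lat_plus v) simp
      thus ?case using Suc by (simp add: algebra_simps)
    qed simp
    have "(\<lambda>n. f v) \<longlonglongrightarrow> 0" using up[OF v] unfolding c .
    thus ?thesis using LIMSEQ_const_iff by blast
  next
    case 2
    have c: "f (v - 4 * real n) = f v" for n
    proof (induction n)
      case (Suc n)
      have "f ((v - 4 * real n - 4) + 4) = f (v - 4 * real n - 4)"
        using 2 by (intro step lat_m4 lat_minus v) simp
      thus ?case using Suc by (simp add: algebra_simps)
    qed simp
    have "(\<lambda>n. f v) \<longlonglongrightarrow> 0" using down[OF v] unfolding c .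
    thus ?thesis using LIMSEQ_const_iff by blast
  qed
qed


lemma part1:
  assumes e: "0 < e" "e < 4" and rc: "0 < \<rho>c" and H: "in_H e \<psi>"
    and z: "\<forall>v\<in>lat e. rho1 \<rho>c \<psi> v = 0"
  shows "\<psi> = (\<lambda>_. 0)"
proof -
  define G where "G v = complex_of_real (Bfun (v+2) * Atil (v+2) :: real) * (\<psi> (v+4) - \<psi> v)" for v
  have G1: "G v = G (v - 4)" if v: "v \<in> lat e" for v
  proof -
    have "rho1 \<rho>c \<psi> v = 0" using z v by blast
    hence "complex_of_real (- \<rho>c / 8) * (G v - G (v - 4)) = 0"
      unfolding rho1_def Dop_def mult_def G_def by (simp add: algebra_simps)
    thus ?thesis using rc by simp
  qed
  have G0: "G v = 0" if v: "v \<in> lat e" for v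
  proof -
    have c: "G (v + 4 * real n) = G v" for n
    proof (induction n)
      case (Suc n)
      have "G (v + 4 * real n + 4) = G (v + 4 * real n)"
        using G1[OF lat_p4[OF lat_plus[OF v]]] by simp
      thus ?case using Suc by (simp add: algebra_simps)
    qed simp
    have d: "(\<lambda>n. \<psi> (v + 4 + 4 * real n) - \<psi> (v + 4 * real n)) \<longlonglongrightarrow> 0"
      using tendsto_diff[OF H_up[OF H lat_p4[OF v]] H_up[OF H v]] by simp
    have "(\<lambda>n. G (v + 4 * real n)) \<longlonglongrightarrow> 0"
    proof (rule tendsto_0_le[OF d, where K=54])
      show "\<forall>\<^sub>F n in sequentially. norm (G (v + 4 * real n)) \<le> norm (\<psi> (v + 4 + 4 * real n) - \<psi> (v + 4 * real n)) * 54"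
        using ev_ge[of "v+2"]
      proof eventually_elim
        case (elim n)
        have b: "0 \<le> Bfun (v + 4 * real n + 2) * Atil (v + 4 * real n + 2)"
          using B_nonneg by (simp add: Atil_def)
        have b2: "Bfun (v + 4 * real n + 2) * Atil (v + 4 * real n + 2) \<le> 54"
          using BA_le elim by (simp add: algebra_simps)
        have "norm (G (v + 4 * real n)) = \<bar>Bfun (v + 4 * real n + 2) * Atil (v + 4 * real n + 2)\<bar> * norm (\<psi> (v + 4 + 4 * real n) - \<psi> (v + 4 * real n))"
        proof -
          have "v + 4 * real n + 4 = v + 4 + 4 * real n" by simp
          thus ?thesis unfolding G_def norm_mult norm_of_real by (simp add: add_ac)
        qed
        also have "... \<le> 54 * norm (\<psi> (v + 4 + 4 * real n) - \<psi> (v + 4 * real n))"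
          using b b2 by (intro mult_right_mono) auto
        finally show ?case by simp
      qed
    qed
    thus ?thesis unfolding c using LIMSEQ_const_iff by blast
  qed
  have step: "\<psi> (v + 4) = \<psi> v" if v: "v \<in> lat e" and "v + 2 \<noteq> 0" for v
  proof -
    have "Bfun (v+2) * Atil (v+2) \<noteq> 0" using B_ne0 A_ne0 that by simp
    thus ?thesis using G0[OF v] unfolding G_def by simp
  qed
  show ?thesis
  proof
    fix v
    show "\<psi> v = 0"
    proof (cases "v \<in> lat e")
      case True
      show ?thesis by (rule chain_zero[OF H_up[OF H] H_down[OF H] step e True])
    next
      case False thus ?thesis using H unfolding in_H_def by blast
    qed
  qed
qed


lemma harm_contra:
  assumes w: "w \<ge> 1" and s: "summable (\<lambda>k. 1 / (w + 4 * real k))"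
  shows False
proof -
  have s2: "summable (\<lambda>k. (w + 4) * (1 / (w + 4 * real k)))" using summable_mult[OF s] .
  have "summable (\<lambda>n. inverse (real n))"
  proof (rule summable_comparison_test'[OF s2, where N=1])
    fix n :: nat assume n: "n \<ge> 1"
    have p: "w + 4 * real n > 0" using w by simp
    have "w + 4 * real n \<le> (w + 4) * real n" using w n
      by (simp add: algebra_simps)
    hence "inverse (real n) \<le> (w + 4) / (w + 4 * real n)" using n p
      by (simp add: field_simps)
    thus "norm (inverse (real n)) \<le> (w + 4) * (1 / (w + 4 * real n))" by simp
  qed
  thus False using not_summable_harmonic by blast
qed

lemma aux: "(g::complex) \<noteq> 0 \<Longrightarrow> (x::real) \<noteq> 0 \<Longrightarrow> (2/g)*(g/complex_of_real(2*x)) = complex_of_real(1/x)"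
  by (simp add: field_simps)

lemma part2:
  assumes e: "0 < e" "e < 4" and rc: "0 < \<rho>c" and H: "in_H e \<psi>"
    and z: "\<forall>v\<in>lat e. rho2 \<rho>c \<psi> v = 0"
  shows "\<psi> = (\<lambda>_. 0)"
proof -
  define u where "u v = complex_of_real (sqrt (Bfun v)) * \<psi> v" for v
  define G where "G v = complex_of_real (Atil (v+2)) * (u (v+4) - u v)" for v
  have spos: "sqrt (Bfun v) \<noteq> 0" if "v \<in> lat e" for v
    using B_ne0[OF lat_ne0[OF that e]] by simp
  have G1: "G v = G (v - 4)" if v: "v \<in> lat e" for v
  proof -
    have "rho2 \<rho>c \<psi> v = 0" using z v by blast
    hence "complex_of_real (- \<rho>c / 8) * (complex_of_real (sqrt (Bfun v)) * (G v - G (v - 4))) = 0"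
      unfolding rho2_def Dop_def mult_def G_def u_def by (simp add: algebra_simps)
    thus ?thesis using rc spos[OF v] by simp
  qed
  have uup: "(\<lambda>n. u (v + 4 * real n)) \<longlonglongrightarrow> 0" if v: "v \<in> lat e" for v
  proof (rule tendsto_0_le[OF H_up[OF H v], where K="sqrt 27"])
    show "\<forall>\<^sub>F n in sequentially. norm (u (v + 4 * real n)) \<le> norm (\<psi> (v + 4 * real n)) * sqrt 27"
      using ev_ge[of v]
    proof eventually_elim
      case (elim n)
      have "sqrt (Bfun (v + 4 * real n)) \<le> sqrt 27" using B_le[OF elim] by simp
      hence "sqrt (Bfun (v + 4 * real n)) * norm (\<psi> (v + 4 * real n)) \<le> sqrt 27 * norm (\<psi> (v + 4 * real n))"
        by (intro mult_right_mono) auto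
      moreover have "norm (u (v + 4 * real n)) = sqrt (Bfun (v + 4 * real n)) * norm (\<psi> (v + 4 * real n))"
        unfolding u_def norm_mult using B_nonneg by simp
      ultimately show ?case by (simp add: mult.commute)
    qed
  qed
  have udown: "(\<lambda>n. u (v - 4 * real n)) \<longlonglongrightarrow> 0" if v: "v \<in> lat e" for v
  proof (rule tendsto_0_le[OF H_down[OF H v], where K="sqrt 27"])
    show "\<forall>\<^sub>F n in sequentially. norm (u (v - 4 * real n)) \<le> norm (\<psi> (v - 4 * real n)) * sqrt 27"
      using ev_le[of v]
    proof eventually_elim
      case (elim n)
      have "Bfun (v - 4 * real n) = Bfun (-(v - 4 * real n))" by (simp only: B_even)
      also have "... \<le> 27" using elim by (intro B_le) simp
      finally have "sqrt (Bfun (v - 4 * real n)) \<le> sqrt 27" by simp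
      hence "sqrt (Bfun (v - 4 * real n)) * norm (\<psi> (v - 4 * real n)) \<le> sqrt 27 * norm (\<psi> (v - 4 * real n))"
        by (intro mult_right_mono) auto
      moreover have "norm (u (v - 4 * real n)) = sqrt (Bfun (v - 4 * real n)) * norm (\<psi> (v - 4 * real n))"
        unfolding u_def norm_mult using B_nonneg by simp
      ultimately show ?case by (simp add: mult.commute)
    qed
  qed
  have G0: "G v = 0" if v: "v \<in> lat e" for v
  proof (rule ccontr)
    assume K: "G v \<noteq> 0"
    have c: "G (v + 4 * real n) = G v" for n
    proof (induction n)
      case (Suc n)
      have "G (v + 4 * real n + 4) = G (v + 4 * real n)"
        using G1[OF lat_p4[OF lat_plus[OF v]]] by simp
      thus ?case using Suc by (simp add: algebra_simps)
    qed simp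
    obtain N :: nat where N: "(1 - v - 2)/4 \<le> real N" using real_arch_simple by blast
    define w where "w = v + 4 * real N"
    have w1: "w + 2 \<ge> 1" using N unfolding w_def by simp
    have wl: "w \<in> lat e" unfolding w_def by (rule lat_plus[OF v])
    define f where "f i = u (w + 4 * real i)" for i
    have d: "f (Suc k) - f k = G v / complex_of_real (2 * (w + 2 + 4 * real k))" for k
    proof -
      have "G (w + 4 * real k) = G v" using c[of "N + k"] unfolding w_def by (simp add: algebra_simps)
      moreover have "Atil (w + 4 * real k + 2) = 2 * (w + 2 + 4 * real k)"
        using A_eq[of "w + 4 * real k + 2"] w1 by simp
      moreover have "w + 4 * real k + 2 \<noteq> 0" using w1 by simp
      ultimately have eq: "complex_of_real (2 * (w + 2 + 4 * real k)) * (u (w + 4 * real k + 4) - u (w + 4 * real k)) = G v"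
        unfolding G_def by (simp add: add_ac)
      have fs: "f (Suc k) - f k = u (w + 4 * real k + 4) - u (w + 4 * real k)"
        unfolding f_def by (simp add: algebra_simps)
      have "2 * (w + 2 + 4 * real k) \<noteq> 0" using w1 by simp
      hence nz: "complex_of_real (2 * (w + 2 + 4 * real k)) \<noteq> 0" by (metis of_real_eq_0_iff)
      show ?thesis unfolding fs using eq nz by (simp add: eq_divide_eq mult.commute)
    qed
    have "(\<lambda>m. \<Sum>k<m. f (Suc k) - f k) \<longlonglongrightarrow> 0 - f 0"
      unfolding sum_lessThan_telescope using uup[OF wl] unfolding f_def by (intro tendsto_diff) auto
    hence "summable (\<lambda>k. f (Suc k) - f k)" unfolding summable_def sums_def by blast
    hence sm: "summable (\<lambda>k. (2 / G v) * (f (Suc k) - f k))" by (rule summable_mult)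
    have eqk: "(2 / G v) * (f (Suc k) - f k) = complex_of_real (1 / (w + 2 + 4 * real k))" for k
      unfolding d using K w1 aux[of "G v" "w + 2 + 4 * real k"] by simp
    have "summable (\<lambda>k. complex_of_real (1 / (w + 2 + 4 * real k)))" using sm unfolding eqk .
    hence "summable (\<lambda>k. 1 / (w + 2 + 4 * real k))" by (simp only: summable_complex_of_real)
    thus False by (rule harm_contra[OF w1])
  qed
  have step: "u (v + 4) = u v" if v: "v \<in> lat e" and "v + 2 \<noteq> 0" for v
  proof -
    have "Atil (v+2) \<noteq> 0" using A_ne0 that by simp
    thus ?thesis using G0[OF v] unfolding G_def by simp
  qed
  show ?thesis
  proof
    fix v
    show "\<psi> v = 0"
    proof (cases "v \<in> lat e")
      case True
      have "u v = 0" by (rule chain_zero[OF uup udown step e True])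
      thus ?thesis using spos[OF True] unfolding u_def by simp
    next
      case False thus ?thesis using H unfolding in_H_def by blast
    qed
  qed
qed


theorem mainTheorem4:
  fixes \<epsilon> \<rho>c :: real
  assumes "0 < \<epsilon>" and "\<epsilon> < 4" and "0 < \<rho>c"
  shows "(\<forall>\<psi>. in_H \<epsilon> \<psi> \<and> (\<forall>v\<in>lat \<epsilon>. rho1 \<rho>c \<psi> v = 0) \<longrightarrow> \<psi> = (\<lambda>_. 0))
       \<and> (\<forall>\<psi>. in_H \<epsilon> \<psi> \<and> (\<forall>v\<in>lat \<epsilon>. rho2 \<rho>c \<psi> v = 0) \<longrightarrow> \<psi> = (\<lambda>_. 0))"
  using part1[OF assms] part2[OF assms] by blast

end
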